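(* Let $\xi:I\to\mathbb{R}^3$ be a smooth arclength-parametrized curve with curvature $k>0$ and torsion $\tau\neq0$ on $I$, and let $t_0\in I$. Then there exists $\delta>0$ such that for every $t\in I$ with $0<|t-t_0|<\delta$, the osculating circle of $\xi$ at $\xi(t_0)$ is disjoint from the osculating plane of $\xi$ at $\xi(t)$. In particular, for such $t$ the osculating circles of $\xi$ at $\xi(t_0)$ and at $\xi(t)$ are not linked.
   Context: The osculating plane of $\xi$ at $\xi(t)$ is $\xi(t)+\operatorname{span}(\mathbf{t}(t),\mathbf{n}(t))$, where $\mathbf{t}=\xi'$ and $\mathbf{n}=\xi''/k$. The osculating circle at $\xi(t)$ is the circle in this plane with center $\xi(t)+\frac1{k(t)}\mathbf{n}(t)$ and radius $1/k(t)$. *)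

theory Defs
  imports "HOL-Analysis.Analysis"
begin

fun vderiv :: "nat \<Rightarrow> real set \<Rightarrow> (real \<Rightarrow> real^3) \<Rightarrow> real \<Rightarrow> real^3" where
  "vderiv 0 I f = f"
| "vderiv (Suc n) I f = (\<lambda>t. vector_derivative (vderiv n I f) (at t within I))"

definition smooth_curve_on :: "real set \<Rightarrow> (real \<Rightarrow> real^3) \<Rightarrow> bool" where
  "smooth_curve_on I f \<longleftrightarrow>
     (\<forall>n. \<forall>t\<in>I. (vderiv n I f has_vector_derivative vderiv (Suc n) I f t) (at t within I))"

definition arclength_param :: "real set \<Rightarrow> (real \<Rightarrow> real^3) \<Rightarrow> bool" where
  "arclength_param I f \<longleftrightarrow> (\<forall>t\<in>I. norm (vderiv 1 I f t) = 1)"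

definition tangent :: "real set \<Rightarrow> (real \<Rightarrow> real^3) \<Rightarrow> real \<Rightarrow> real^3" where
  "tangent I f t = vderiv 1 I f t"

definition curvature :: "real set \<Rightarrow> (real \<Rightarrow> real^3) \<Rightarrow> real \<Rightarrow> real" where
  "curvature I f t = norm (vderiv 2 I f t)"

definition normal :: "real set \<Rightarrow> (real \<Rightarrow> real^3) \<Rightarrow> real \<Rightarrow> real^3" where
  "normal I f t = (1 / curvature I f t) *\<^sub>R vderiv 2 I f t"

text \<open>Torsion of an arclength-parametrized curve: tau = det(xi', xi'', xi''') / k^2.\<close>
definition torsion :: "real set \<Rightarrow> (real \<Rightarrow> real^3) \<Rightarrow> real \<Rightarrow> real" where
  "torsion I f t = ((cross3 (vderiv 1 I f t) (vderiv 2 I f t)) \<bullet> vderiv 3 I f t)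
                     / (curvature I f t)^2"

definition osculating_plane :: "real set \<Rightarrow> (real \<Rightarrow> real^3) \<Rightarrow> real \<Rightarrow> (real^3) set" where
  "osculating_plane I f t =
     {f t + a *\<^sub>R tangent I f t + b *\<^sub>R normal I f t | a b. True}"

definition osculating_center :: "real set \<Rightarrow> (real \<Rightarrow> real^3) \<Rightarrow> real \<Rightarrow> real^3" where
  "osculating_center I f t = f t + (1 / curvature I f t) *\<^sub>R normal I f t"

definition osculating_circle :: "real set \<Rightarrow> (real \<Rightarrow> real^3) \<Rightarrow> real \<Rightarrow> (real^3) set" where
  "osculating_circle I f t =
     {p \<in> osculating_plane I f t. dist p (osculating_center I f t) = 1 / curvature I f t}"

definition osculating_disk :: "real set \<Rightarrow> (real \<Rightarrow> real^3) \<Rightarrow> real \<Rightarrow> (real^3) set" where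
  "osculating_disk I f t =
     {p \<in> osculating_plane I f t. dist p (osculating_center I f t) \<le> 1 / curvature I f t}"

end

theory Submission
  imports Defs
begin
unbundle cross3_syntax


lemma bb_cross: "bounded_bilinear (cross3)"
  unfolding bilinear_conv_bounded_bilinear[symmetric]
  by (simp add: bilinear_def linear_iff cross_add_left cross_add_right cross_mult_left cross_mult_right)

lemma taylor_lim:
  fixes g :: "nat \<Rightarrow> real \<Rightarrow> real"
  assumes F: "F = at_left t0 \<or> F = at_right t0"
    and der: "eventually (\<lambda>x. \<forall>m<n. (g m has_real_derivative g (Suc m) x) (at x)) F"
    and z: "\<forall>m<n. (g m \<longlongrightarrow> 0) F"
    and c: "(g n \<longlongrightarrow> c) F"
  shows "((\<lambda>x. g 0 x / (x - t0)^n) \<longlongrightarrow> c / fact n) F"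
  using der z c
proof (induction n arbitrary: g c)
  case 0
  then show ?case by simp
next
  case (Suc n)
  have IH: "((\<lambda>x. g 1 x / (x - t0)^n) \<longlongrightarrow> c / fact n) F"
  proof -
    have a: "\<forall>\<^sub>F x in F. \<forall>m<n. (g (Suc m) has_real_derivative g (Suc (Suc m)) x) (at x)"
      using Suc.prems(1) by (auto elim!: eventually_mono)
    have b: "\<forall>m<n. (g (Suc m) \<longlongrightarrow> 0) F" using Suc.prems(2) by auto
    show ?thesis using Suc.IH[of "\<lambda>m. g (Suc m)" c, OF a b Suc.prems(3)] by simp
  qed
  have ne: "eventually (\<lambda>x. x \<noteq> t0) F"
    using F by (auto simp: eventually_at_filter)
  have lim: "((\<lambda>x. g (Suc 0) x / (real (Suc n) * (x - t0)^n)) \<longlongrightarrow> c / fact (Suc n)) F"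
  proof -
    have "((\<lambda>x. (g 1 x / (x - t0)^n) / real (Suc n)) \<longlongrightarrow> (c / fact n) / real (Suc n)) F"
      by (intro tendsto_divide IH tendsto_const) auto
    then show ?thesis by (simp add: field_simps fact_Suc)
  qed
  have g0: "(g 0 \<longlongrightarrow> 0) F" using Suc.prems by auto
  have G0: "((\<lambda>x. (x - t0)^Suc n) \<longlongrightarrow> 0) F"
  proof -
    have "((\<lambda>x. (x - t0)^Suc n) \<longlongrightarrow> (t0 - t0)^Suc n) F"
      using F by (auto intro!: tendsto_eq_intros)
    then show ?thesis by simp
  qed
  have e1: "eventually (\<lambda>x. (x - t0)^Suc n \<noteq> 0) F" by (rule eventually_mono[OF ne]) simp
  have e2: "eventually (\<lambda>x. real (Suc n) * (x - t0)^n \<noteq> 0) F" by (rule eventually_mono[OF ne]) simp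
  have e3: "eventually (\<lambda>x. DERIV (g 0) x :> g (Suc 0) x) F" using Suc.prems(1) by (auto elim!: eventually_mono)
  have e4: "eventually (\<lambda>x. DERIV (\<lambda>x. (x - t0)^Suc n) x :> real (Suc n) * (x - t0)^n) F"
    by (intro always_eventually allI) (auto intro!: derivative_eq_intros; cases n; simp add: algebra_simps)
  from F show ?case
  proof
    assume h: "F = at_left t0"
    show ?case using lhopital_left[OF g0[unfolded h] G0[unfolded h] e1[unfolded h] e2[unfolded h]
        e3[unfolded h] e4[unfolded h] lim[unfolded h]] h by simp
  next
    assume h: "F = at_right t0"
    show ?case using lhopital_right[OF g0[unfolded h] G0[unfolded h] e1[unfolded h] e2[unfolded h]
        e3[unfolded h] e4[unfolded h] lim[unfolded h]] h by simp
  qed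
qed




lemma dcross:
  fixes f g :: "real \<Rightarrow> real^3"
  assumes "(f has_vector_derivative f') (at x within S)" "(g has_vector_derivative g') (at x within S)"
    "D = f x \<times> g' + f' \<times> g x"
  shows "((\<lambda>x. f x \<times> g x) has_vector_derivative D) (at x within S)"
  using bounded_bilinear.has_vector_derivative[OF bb_cross assms(1,2)] assms(3) by simp

lemma dinner:
  fixes f g :: "real \<Rightarrow> real^3"
  assumes "(f has_vector_derivative f') (at x within S)" "(g has_vector_derivative g') (at x within S)"
    "D = f x \<bullet> g' + f' \<bullet> g x"
  shows "((\<lambda>x. f x \<bullet> g x) has_real_derivative D) (at x within S)"
  using bounded_bilinear.has_vector_derivative[OF bounded_bilinear_inner assms(1,2)] assms(3)
  by (simp add: has_real_derivative_iff_has_vector_derivative)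

lemma filter_le_within:
  assumes "eventually (\<lambda>y. y \<in> I) (at x within S)"
  shows "at x within S \<le> at x within I"
  using assms unfolding at_within_def
  by (auto simp: le_principal eventually_inf_principal elim!: eventually_mono intro: le_infI1)

lemma key_ineq:
  fixes a b A B e k :: real
  assumes "k > 0" "a^2 + b^2 * k^2 = 1 / k^2" "e + a * A + (b + 1 / k^2) * B = 0"
  shows "k^2 * e^2 + 2 * e * B - A^2 \<le> 0"
proof -
  have id: "(a^2 + b^2 * k^2) * (A^2 + B^2 / k^2) - (a*A + b*B)^2 = (a*B/k - b*k*A)^2"
    using assms(1) by (simp add: field_simps power2_eq_square)
  have "(a*A + b*B)^2 \<le> (a^2 + b^2 * k^2) * (A^2 + B^2 / k^2)"
    using id by (smt (verit) zero_le_power2)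
  moreover have "a*A + b*B = -(e + B / k^2)" using assms(3) by (simp add: algebra_simps)
  then have "(a*A + b*B)^2 = (e + B / k^2)^2" by (simp only: power2_minus)
  ultimately have "(e + B / k^2)^2 \<le> (1/k^2) * (A^2 + B^2 / k^2)" using assms(2) by simp
  moreover have "k^2 * e^2 + 2 * e * B - A^2 = k^2 * ((e + B / k^2)^2 - (1/k^2) * (A^2 + B^2 / k^2))"
    using assms(1) by (simp add: field_simps power2_eq_square)
  ultimately show ?thesis using assms(1)
    by (simp add: mult_nonneg_nonpos)
qed

lemma alg4:
  fixes s k e B A :: real
  assumes "s \<noteq> 0"
  shows "k^2 * (e / s^3)^2 * s^2 + 2 * (e / s^3) * (B / s^1) - (A / s^2)^2 = (k^2 * e^2 + 2 * e * B - A^2) / s^4"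
proof -
  have "k^2 * (e / s^3)^2 * s^2 = k^2 * e^2 / s^4" using assms by (simp add: power_divide power_mult_distrib field_simps)
  moreover have "2 * (e / s^3) * (B / s^1) = 2 * e * B / s^4" using assms by (simp add: field_simps) (simp add: eval_nat_numeral)
  moreover have "(A / s^2)^2 = A^2 / s^4" by (simp add: power_divide flip: power_mult)
  ultimately show ?thesis by (simp add: diff_divide_distrib add_divide_distrib)
qed




theorem mainTheorem10:
  fixes \<xi> :: "real \<Rightarrow> real^3" and I :: "real set" and t0 :: real
  assumes "is_interval I"
    and "smooth_curve_on I \<xi>"
    and "arclength_param I \<xi>"
    and "\<forall>t\<in>I. curvature I \<xi> t > 0"
    and "\<forall>t\<in>I. torsion I \<xi> t \<noteq> 0"
    and "t0 \<in> I"
  shows "\<exists>\<delta>>0. \<forall>t\<in>I. 0 < \<bar>t - t0\<bar> \<and> \<bar>t - t0\<bar> < \<delta> \<longrightarrow>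
           osculating_circle I \<xi> t0 \<inter> osculating_plane I \<xi> t = {} \<and>
           osculating_circle I \<xi> t0 \<inter> osculating_disk I \<xi> t = {}"
proof (cases "\<exists>t1\<in>I. t1 \<noteq> t0")
  case False
  show ?thesis
  proof (intro exI[of _ "1::real"] conjI ballI impI)
    fix t assume "t \<in> I" "0 < \<bar>t - t0\<bar> \<and> \<bar>t - t0\<bar> < 1"
    with False have False by auto
    thus "osculating_circle I \<xi> t0 \<inter> osculating_plane I \<xi> t = {}"
      "osculating_circle I \<xi> t0 \<inter> osculating_disk I \<xi> t = {}" by auto
  qed simp
next
  case True
  then obtain t1 where t1: "t1 \<in> I" "t1 \<noteq> t0" by blast
  define d where "d m = vderiv m I \<xi>" for m
  have dv: "\<And>m t. t \<in> I \<Longrightarrow> (d m has_vector_derivative d (Suc m) t) (at t within I)"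
    using assms(2) unfolding smooth_curve_on_def d_def by blast
  have dc: "\<And>m t. t \<in> I \<Longrightarrow> ((d m) \<longlongrightarrow> d m t) (at t within I)"
    using dv has_vector_derivative_continuous continuous_within by blast
  have d0: "d 0 = \<xi>" by (simp add: d_def)
  define k0 where "k0 = norm (d 2 t0)"
  have k0: "k0 > 0" using assms(4,6) by (simp add: k0_def curvature_def d_def)
  define Dt where "Dt = d 1 t0 \<bullet> (d 2 t0 \<times> d 3 t0)"
  have Dt: "Dt \<noteq> 0"
  proof -
    have "torsion I \<xi> t0 \<noteq> 0" using assms by auto
    hence "(d 1 t0 \<times> d 2 t0) \<bullet> d 3 t0 \<noteq> 0" by (auto simp: torsion_def d_def)
    thus ?thesis unfolding Dt_def by (metis cross_triple inner_commute)
  qed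
  have t0d: "at t0 within I \<noteq> bot"
  proof -
    have "t0 islimpt I"
    proof (cases "t0 < t1")
      case True
      have "{t0..t1} \<subseteq> I"
        using is_interval_1[THEN iffD1, OF assms(1), rule_format, OF assms(6) t1(1)] by auto
      moreover have "t0 islimpt {t0..t1}" using True by simp
      ultimately show ?thesis using islimpt_subset by blast
    next
      case False
      hence lt: "t1 < t0" using t1(2) by simp
      have "{t1..t0} \<subseteq> I"
        using is_interval_1[THEN iffD1, OF assms(1), rule_format, OF t1(1) assms(6)] by auto
      moreover have "t0 islimpt {t1..t0}" using lt by simp
      ultimately show ?thesis using islimpt_subset by blast
    qed
    thus ?thesis using trivial_limit_within by blast
  qed
  have n11: "d 1 t0 \<bullet> d 1 t0 = 1"
    using assms(3,6) by (simp add: arclength_param_def d_def norm_eq_1)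
  have n22: "d 2 t0 \<bullet> d 2 t0 = k0^2" by (simp add: k0_def power2_norm_eq_inner)
  have n12: "d 1 t0 \<bullet> d 2 t0 = 0"
  proof -
    have a: "((\<lambda>t. d 1 t \<bullet> d 1 t) has_real_derivative (d 1 t0 \<bullet> d 2 t0 + d 2 t0 \<bullet> d 1 t0)) (at t0 within I)"
      by (rule dinner[OF dv[OF assms(6)] dv[OF assms(6)]]) (simp add: numeral_2_eq_2)
    have b: "((\<lambda>t. d 1 t \<bullet> d 1 t) has_real_derivative 0) (at t0 within I)"
    proof (rule has_field_derivative_transform_within[OF DERIV_const zero_less_one assms(6)])
      fix x assume "x \<in> I"
      thus "1 = d 1 x \<bullet> d 1 x" using assms(3) by (simp add: arclength_param_def d_def norm_eq_1)
    qed
    have "d 1 t0 \<bullet> d 2 t0 + d 2 t0 \<bullet> d 1 t0 = 0"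
      using vector_derivative_unique_within[OF t0d a[unfolded has_real_derivative_iff_has_vector_derivative]
          b[unfolded has_real_derivative_iff_has_vector_derivative]] .
    thus ?thesis by (simp add: inner_commute)
  qed

  have D1: "(d 0 has_vector_derivative d 1 t) (at t within I)"
    and D2: "(d 1 has_vector_derivative d 2 t) (at t within I)"
    and D3: "(d 2 has_vector_derivative d 3 t) (at t within I)"
    and D4: "(d 3 has_vector_derivative d 4 t) (at t within I)"
    and D5: "(d 4 has_vector_derivative d 5 t) (at t within I)" if t: "t \<in> I" for t
    using dv[OF t, of 0] dv[OF t, of 1] dv[OF t, of 2] dv[OF t, of 3] dv[OF t, of 4]
    by (simp_all add: numeral_eq_Suc)
  define A where "A = (\<lambda>t. d 1 t0 \<bullet> (d 1 t \<times> d 2 t))"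
  define A1 where "A1 = (\<lambda>t. d 1 t0 \<bullet> (d 1 t \<times> d 3 t))"
  define A2 where "A2 = (\<lambda>t. d 1 t0 \<bullet> (d 1 t \<times> d 4 t + d 2 t \<times> d 3 t))"
  define B where "B = (\<lambda>t. d 2 t0 \<bullet> (d 1 t \<times> d 2 t))"
  define B1 where "B1 = (\<lambda>t. d 2 t0 \<bullet> (d 1 t \<times> d 3 t))"
  define e where "e = (\<lambda>t. (d 0 t0 - d 0 t) \<bullet> (d 1 t \<times> d 2 t))"
  define e1 where "e1 = (\<lambda>t. (d 0 t0 - d 0 t) \<bullet> (d 1 t \<times> d 3 t))"
  define e2 where "e2 = (\<lambda>t. (d 0 t0 - d 0 t) \<bullet> (d 1 t \<times> d 4 t + d 2 t \<times> d 3 t))"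
  define e3 where "e3 = (\<lambda>t. (d 0 t0 - d 0 t) \<bullet> ((d 1 t \<times> d 5 t + d 2 t \<times> d 4 t) + (d 2 t \<times> d 4 t + d 3 t \<times> d 3 t))
                          + (0 - d 1 t) \<bullet> (d 1 t \<times> d 4 t + d 2 t \<times> d 3 t))"
  have dA: "(A has_real_derivative A1 t) (at t within I)"
    and dA1: "(A1 has_real_derivative A2 t) (at t within I)"
    and dB: "(B has_real_derivative B1 t) (at t within I)"
    and de: "(e has_real_derivative e1 t) (at t within I)"
    and de1: "(e1 has_real_derivative e2 t) (at t within I)"
    and de2: "(e2 has_real_derivative e3 t) (at t within I)" if t: "t \<in> I" for t
  proof -
    show "(A has_real_derivative A1 t) (at t within I)" unfolding A_def
      apply (rule dinner[OF has_vector_derivative_const dcross[OF D2[OF t] D3[OF t]]])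
      apply (rule refl) by (simp add: A1_def inner_add_right)
    show "(A1 has_real_derivative A2 t) (at t within I)" unfolding A1_def
      apply (rule dinner[OF has_vector_derivative_const dcross[OF D2[OF t] D4[OF t]]])
      apply (rule refl) by (simp add: A2_def inner_add_right)
    show "(B has_real_derivative B1 t) (at t within I)" unfolding B_def
      apply (rule dinner[OF has_vector_derivative_const dcross[OF D2[OF t] D3[OF t]]])
      apply (rule refl) by (simp add: B1_def inner_add_right)
    show "(e has_real_derivative e1 t) (at t within I)" unfolding e_def
      apply (rule dinner[OF has_vector_derivative_diff[OF has_vector_derivative_const D1[OF t]]
            dcross[OF D2[OF t] D3[OF t]]])
      apply (rule refl) by (simp add: e1_def inner_add_right dot_cross_self)
    show "(e1 has_real_derivative e2 t) (at t within I)" unfolding e1_def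
      apply (rule dinner[OF has_vector_derivative_diff[OF has_vector_derivative_const D1[OF t]]
            dcross[OF D2[OF t] D4[OF t]]])
      apply (rule refl) by (simp add: e2_def inner_add_right dot_cross_self)
    show "(e2 has_real_derivative e3 t) (at t within I)" unfolding e2_def
      apply (rule dinner[OF has_vector_derivative_diff[OF has_vector_derivative_const D1[OF t]]
            has_vector_derivative_add[OF dcross[OF D2[OF t] D5[OF t]] dcross[OF D3[OF t] D4[OF t]]]])
      apply (rule refl, rule refl) by (simp add: e3_def)
  qed

  have cA: "(A \<longlongrightarrow> A t0) (at t0 within I)" "(A1 \<longlongrightarrow> A1 t0) (at t0 within I)"
     "(A2 \<longlongrightarrow> A2 t0) (at t0 within I)" "(B \<longlongrightarrow> B t0) (at t0 within I)"
     "(B1 \<longlongrightarrow> B1 t0) (at t0 within I)" "(e \<longlongrightarrow> e t0) (at t0 within I)"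
     "(e1 \<longlongrightarrow> e1 t0) (at t0 within I)" "(e2 \<longlongrightarrow> e2 t0) (at t0 within I)"
     "(e3 \<longlongrightarrow> e3 t0) (at t0 within I)"
    unfolding A_def A1_def A2_def B_def B1_def e_def e1_def e2_def e3_def
    by (intro tendsto_intros bounded_bilinear.tendsto[OF bb_cross] dc[OF assms(6)])+
  have vA: "A t0 = 0" "A1 t0 = 0" "A2 t0 = Dt" "B t0 = 0" "B1 t0 = - Dt"
    "e t0 = 0" "e1 t0 = 0" "e2 t0 = 0" "e3 t0 = - Dt"
    unfolding A_def A1_def A2_def B_def B1_def e_def e1_def e2_def e3_def Dt_def
    by (simp_all add: dot_cross_self inner_add_right) (simp add: cross3_simps)
  define G where "G = (\<lambda>t. k0^2 * (e t)^2 + 2 * e t * B t - (A t)^2)"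
  have side: "eventually (\<lambda>x. 0 < G x) F"
    if F: "F = at_left t0 \<or> F = at_right t0" and iI: "eventually (\<lambda>x. x \<in> interior I) F" for F
  proof -
    have evI: "eventually (\<lambda>x. x \<in> I) F" using iI interior_subset by (auto elim!: eventually_mono)
    have Fle: "F \<le> at t0 within I"
      using F evI filter_le_within by auto
    have lim: "(f \<longlongrightarrow> v) F" if "(f \<longlongrightarrow> v) (at t0 within I)" for f and v :: real
      using tendsto_mono[OF Fle that] .
    have dint: "at x within I = at x" if "x \<in> interior I" for x using at_within_interior that by blast
    have derA: "eventually (\<lambda>x. \<forall>m<2. ((\<lambda>m. [A,A1,A2] ! m) m has_real_derivative (\<lambda>m. [A,A1,A2] ! m) (Suc m) x) (at x)) F"
      using iI
    proof (rule eventually_mono)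
      fix x assume x: "x \<in> interior I"
      hence xI: "x \<in> I" using interior_subset by blast
      show "\<forall>m<2. ((\<lambda>m. [A,A1,A2] ! m) m has_real_derivative (\<lambda>m. [A,A1,A2] ! m) (Suc m) x) (at x)"
        using dA[OF xI] dA1[OF xI] dint[OF x] by (auto simp: less_Suc_eq numeral_2_eq_2)
    qed
    have tA: "((\<lambda>x. A x / (x - t0)^2) \<longlongrightarrow> Dt / fact 2) F"
      using taylor_lim[OF F derA, of Dt] lim[OF cA(1)] lim[OF cA(2)] lim[OF cA(3)] vA
      by (simp add: less_Suc_eq numeral_2_eq_2)
    have derB: "eventually (\<lambda>x. \<forall>m<1. ((\<lambda>m. [B,B1] ! m) m has_real_derivative (\<lambda>m. [B,B1] ! m) (Suc m) x) (at x)) F"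
      using iI
    proof (rule eventually_mono)
      fix x assume x: "x \<in> interior I"
      hence xI: "x \<in> I" using interior_subset by blast
      show "\<forall>m<1. ((\<lambda>m. [B,B1] ! m) m has_real_derivative (\<lambda>m. [B,B1] ! m) (Suc m) x) (at x)"
        using dB[OF xI] dint[OF x] by auto
    qed
    have tB: "((\<lambda>x. B x / (x - t0)^1) \<longlongrightarrow> - Dt / fact 1) F"
      using taylor_lim[OF F derB, of "- Dt"] lim[OF cA(4)] lim[OF cA(5)] vA
      by simp
    have derE: "eventually (\<lambda>x. \<forall>m<3. ((\<lambda>m. [e,e1,e2,e3] ! m) m has_real_derivative (\<lambda>m. [e,e1,e2,e3] ! m) (Suc m) x) (at x)) F"
      using iI
    proof (rule eventually_mono)
      fix x assume x: "x \<in> interior I"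
      hence xI: "x \<in> I" using interior_subset by blast
      show "\<forall>m<3. ((\<lambda>m. [e,e1,e2,e3] ! m) m has_real_derivative (\<lambda>m. [e,e1,e2,e3] ! m) (Suc m) x) (at x)"
        using de[OF xI] de1[OF xI] de2[OF xI] dint[OF x] by (auto simp: less_Suc_eq numeral_3_eq_3)
    qed
    have tE: "((\<lambda>x. e x / (x - t0)^3) \<longlongrightarrow> - Dt / fact 3) F"
      using taylor_lim[OF F derE, of "- Dt"] lim[OF cA(6)] lim[OF cA(7)] lim[OF cA(8)] lim[OF cA(9)] vA
      by (simp add: less_Suc_eq numeral_3_eq_3)
    have s0: "((\<lambda>x. x - t0) \<longlongrightarrow> 0) F"
    proof -
      have "((\<lambda>x. x) \<longlongrightarrow> t0) F" using F by (auto intro: tendsto_ident_at)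
      from tendsto_diff[OF this tendsto_const[of t0]]
      have "((\<lambda>x. x - t0) \<longlongrightarrow> t0 - t0) F" .
      thus ?thesis by (simp only: diff_self)
    qed
    define L where "L = k0^2 * (- Dt / fact 3)^2 * 0^2 + 2 * (- Dt / fact 3) * (- Dt / fact 1) - (Dt / fact 2)^2"
    have tL: "((\<lambda>x. k0^2 * (e x / (x - t0)^3)^2 * (x - t0)^2 + 2 * (e x / (x - t0)^3) * (B x / (x - t0)^1)
              - (A x / (x - t0)^2)^2) \<longlongrightarrow> L) F"
      unfolding L_def
      by (rule tendsto_diff[OF tendsto_add[OF tendsto_mult[OF tendsto_mult[OF tendsto_const tendsto_power[OF tE]]
            tendsto_power[OF s0]] tendsto_mult[OF tendsto_mult[OF tendsto_const tE] tB]] tendsto_power[OF tA]])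
    have Lpos: "L > 0"
    proof -
      have "L = Dt^2 / 12" by (simp add: L_def fact_numeral power2_eq_square field_simps)
      moreover have "Dt^2 > 0" using Dt by simp
      ultimately show ?thesis by linarith
    qed
    have ne: "eventually (\<lambda>x. x \<noteq> t0) F" using F by (auto simp: eventually_at_filter)
    show ?thesis
      using order_tendstoD(1)[OF tL Lpos] ne
    proof (rule eventually_elim2)
      fix x assume pos: "0 < k0^2 * (e x / (x - t0)^3)^2 * (x - t0)^2 + 2 * (e x / (x - t0)^3) * (B x / (x - t0)^1)
              - (A x / (x - t0)^2)^2" and x: "x \<noteq> t0"
      have "k0^2 * (e x / (x - t0)^3)^2 * (x - t0)^2 + 2 * (e x / (x - t0)^3) * (B x / (x - t0)^1)
              - (A x / (x - t0)^2)^2 = G x / (x - t0)^4"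
        unfolding G_def by (rule alg4) (use x in simp)
      with pos have "0 < G x / (x - t0)^4" by simp
      moreover have "0 < (x - t0)^4" using x by simp
      ultimately show "0 < G x" by (simp add: zero_less_divide_iff)
    qed
  qed
  have n21: "d 2 t0 \<bullet> d 1 t0 = 0" using n12 by (simp add: inner_commute)
  have n11': "d (Suc 0) t0 \<bullet> d (Suc 0) t0 = 1" and n12': "d (Suc 0) t0 \<bullet> d 2 t0 = 0"
    and n21': "d 2 t0 \<bullet> d (Suc 0) t0 = 0" using n11 n12 n21 by simp_all
  have geo: "osculating_circle I \<xi> t0 \<inter> osculating_plane I \<xi> t = {}" if tI: "t \<in> I" and Gt: "0 < G t" for t
  proof (rule ccontr)
    assume "osculating_circle I \<xi> t0 \<inter> osculating_plane I \<xi> t \<noteq> {}"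
    then obtain p where pc: "p \<in> osculating_circle I \<xi> t0" and pp: "p \<in> osculating_plane I \<xi> t" by blast
    from pc obtain a b where p: "p = \<xi> t0 + a *\<^sub>R tangent I \<xi> t0 + b *\<^sub>R normal I \<xi> t0"
      and dist: "dist p (osculating_center I \<xi> t0) = 1 / curvature I \<xi> t0"
      unfolding osculating_circle_def osculating_plane_def by blast
    from pp obtain a' b' where p': "p = \<xi> t + a' *\<^sub>R tangent I \<xi> t + b' *\<^sub>R normal I \<xi> t"
      unfolding osculating_plane_def by blast
    have tan: "tangent I \<xi> s = d 1 s" for s by (simp add: tangent_def d_def)
    have nor: "normal I \<xi> s = (1 / norm (d 2 s)) *\<^sub>R d 2 s" for s by (simp add: normal_def curvature_def d_def)
    have cur: "curvature I \<xi> t0 = k0" by (simp add: curvature_def k0_def d_def)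
    define \<beta> where "\<beta> = b / k0 - 1 / k0^2"
    have pv: "p = d 0 t0 + a *\<^sub>R d 1 t0 + (\<beta> + 1/k0^2) *\<^sub>R d 2 t0"
      using p by (simp add: tan nor d0 k0_def[symmetric] \<beta>_def)
    have cv: "osculating_center I \<xi> t0 = d 0 t0 + (1/k0^2) *\<^sub>R d 2 t0"
      by (simp add: osculating_center_def cur nor k0_def[symmetric] d0 power2_eq_square)
    have pc0: "p - osculating_center I \<xi> t0 = a *\<^sub>R d 1 t0 + \<beta> *\<^sub>R d 2 t0"
      unfolding pv cv by (simp add: scaleR_add_left algebra_simps)
    have "(norm (p - osculating_center I \<xi> t0))^2 = a^2 + \<beta>^2 * k0^2"
      unfolding pc0 power2_norm_eq_inner
      by (simp add: inner_add_left inner_add_right n11 n12 n21 n22 n11' n12' n21' power2_eq_square)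
    moreover have "norm (p - osculating_center I \<xi> t0) = 1 / k0" using dist cur by (simp add: dist_norm)
    ultimately have circ: "a^2 + \<beta>^2 * k0^2 = 1 / k0^2" by (simp add: power_divide)
    have "(p - d 0 t) \<bullet> (d 1 t \<times> d 2 t) = 0"
    proof -
      have "p - d 0 t = a' *\<^sub>R d 1 t + (b' / norm (d 2 t)) *\<^sub>R d 2 t"
        using p' by (simp add: tan nor d0)
      thus ?thesis by (simp add: inner_add_left dot_cross_self)
    qed
    moreover have "p - d 0 t = (d 0 t0 - d 0 t) + a *\<^sub>R d 1 t0 + (\<beta> + 1/k0^2) *\<^sub>R d 2 t0"
      using pv by (simp add: algebra_simps)
    ultimately have pl: "e t + a * A t + (\<beta> + 1/k0^2) * B t = 0"
      by (simp add: e_def A_def B_def inner_add_left)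
    have "G t \<le> 0" unfolding G_def using key_ineq[OF k0 circ pl] .
    with Gt show False by simp
  qed
  have evR: "eventually (\<lambda>x. x \<in> I \<longrightarrow> 0 < G x) (at_right t0)"
  proof (cases "\<exists>b\<in>I. b > t0")
    case True
    then obtain b where b: "b \<in> I" "b > t0" by blast
    have "{t0<..<b} \<subseteq> I"
      using is_interval_1[THEN iffD1, OF assms(1), rule_format, OF assms(6) b(1)] by auto
    hence sub: "{t0<..<b} \<subseteq> interior I" by (intro interior_maximal) auto
    have "eventually (\<lambda>x. x \<in> interior I) (at_right t0)"
      using eventually_at_right_real[OF b(2)] sub by (auto elim!: eventually_mono)
    from side[OF _ this] show ?thesis by (auto elim!: eventually_mono)
  next
    case False
    show ?thesis using eventually_at_right_real[of t0 "t0 + 1"] False by (auto elim!: eventually_mono)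
  qed
  have evL: "eventually (\<lambda>x. x \<in> I \<longrightarrow> 0 < G x) (at_left t0)"
  proof (cases "\<exists>b\<in>I. b < t0")
    case True
    then obtain b where b: "b \<in> I" "b < t0" by blast
    have "{b<..<t0} \<subseteq> I"
      using is_interval_1[THEN iffD1, OF assms(1), rule_format, OF b(1) assms(6)] by auto
    hence sub: "{b<..<t0} \<subseteq> interior I" by (intro interior_maximal) auto
    have "eventually (\<lambda>x. x \<in> interior I) (at_left t0)"
      using eventually_at_left_real[OF b(2)] sub by (auto elim!: eventually_mono)
    from side[OF _ this] show ?thesis by (auto elim!: eventually_mono)
  next
    case False
    show ?thesis using eventually_at_left_real[of "t0 - 1" t0] False by (auto elim!: eventually_mono)
  qed
  have "eventually (\<lambda>x. x \<in> I \<longrightarrow> 0 < G x) (at t0)"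
    using evL evR eventually_at_split by blast
  then obtain \<delta> where \<delta>: "\<delta> > 0" and H: "\<And>x. x \<noteq> t0 \<Longrightarrow> dist x t0 < \<delta> \<Longrightarrow> x \<in> I \<longrightarrow> 0 < G x"
    unfolding eventually_at by blast
  have disk: "osculating_disk I \<xi> t \<subseteq> osculating_plane I \<xi> t" for t
    unfolding osculating_disk_def by auto
  show ?thesis
  proof (intro exI[of _ \<delta>] conjI \<delta> ballI impI)
    fix t assume tI: "t \<in> I" and tt: "0 < \<bar>t - t0\<bar> \<and> \<bar>t - t0\<bar> < \<delta>"
    hence "0 < G t" using H[of t] by (auto simp: dist_real_def)
    from geo[OF tI this] disk[of t]
    show "osculating_circle I \<xi> t0 \<inter> osculating_plane I \<xi> t = {}"
      "osculating_circle I \<xi> t0 \<inter> osculating_disk I \<xi> t = {}" by auto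
  qed
qed
end
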